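(* Let $R$ be a locally bounded $K$-category, $X\in\mathrm{Mod}(R)$, $M\in\mathrm{mod}(R)$, and $C$ a full subcategory of $R$ with $\mathrm{supp}(M)\subseteq C$. Let $D$ be the full subcategory of $R$ whose objects are those $x$ with $R(c,x)\neq 0$ for some object $c$ of $C$. If $h:\mathrm{res}_D(X)\to \mathrm{res}_D(M)$ is a homomorphism of $D$-modules, then the family $h^{[0]}=(h^{[0]}_a:X(a)\to M(a))_{a\in \mathrm{ob}(R)}$ defined by $h^{[0]}_a=h_a$ if $a\in\mathrm{supp}(M)$ and $h^{[0]}_a=0$ otherwise is an $R$-module homomorphism $X\to M$.
   Context: A $K$-category ($K$ an algebraically closed field) is locally bounded if distinct objects are non-isomorphic, endomorphism algebras of objects are local, and for each object $x$, $\sum_y\dim_K R(x,y)<\infty$ and $\sum_y\dim_K R(y,x)<\infty$. An $R$-module is a $K$-linear functor $R^{op}\to\mathrm{Mod}(K)$; $\mathrm{Mod}(R)$ is the category of $R$-modules $X$ with $\dim_K X(x)<\infty$ for all $x$, and $\mathrm{mod}(R)$ those with $\sum_x\dim_K M(x)<\infty$. $\mathrm{supp}(M)$ is the full subcategory of objects $x$ with $M(x)\neq 0$. For a full subcategory $D$, $\mathrm{res}_D$ denotes restriction of modules to $D$. *)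

theory Defs
  imports Main "HOL-Computational_Algebra.Polynomial"
begin

definition alg_closed_field :: "'k::field itself \<Rightarrow> bool" where
  "alg_closed_field _ \<longleftrightarrow> (\<forall>p :: 'k poly. degree p > 0 \<longrightarrow> (\<exists>x. poly p x = 0))"

definition fin_dim :: "('k::field \<Rightarrow> 'v::ab_group_add \<Rightarrow> 'v) \<Rightarrow> 'v set \<Rightarrow> bool" where
  "fin_dim s S \<longleftrightarrow> (\<exists>B. finite B \<and> B \<subseteq> S \<and> module.span s B = S)"

(* A K-linear category: objects Ob, morphism spaces Hom x y (morphisms x -> y) are
   subspaces of a K-vector space of morphisms; cmp x y z g f = g o f for f : x -> y, g : y -> z. *)
definition Kcat ::
  "('k::field \<Rightarrow> 'm::ab_group_add \<Rightarrow> 'm) \<Rightarrow> 'o set \<Rightarrow> ('o \<Rightarrow> 'o \<Rightarrow> 'm set)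
   \<Rightarrow> ('o \<Rightarrow> 'o \<Rightarrow> 'o \<Rightarrow> 'm \<Rightarrow> 'm \<Rightarrow> 'm) \<Rightarrow> ('o \<Rightarrow> 'm) \<Rightarrow> bool" where
  "Kcat sR Ob Hom cmp idn \<longleftrightarrow>
     vector_space sR \<and>
     (\<forall>x\<in>Ob. \<forall>y\<in>Ob. module.subspace sR (Hom x y)) \<and>
     (\<forall>x\<in>Ob. \<forall>y\<in>Ob. \<forall>z\<in>Ob. \<forall>f\<in>Hom x y. \<forall>g\<in>Hom y z. cmp x y z g f \<in> Hom x z) \<and>
     (\<forall>w\<in>Ob. \<forall>x\<in>Ob. \<forall>y\<in>Ob. \<forall>z\<in>Ob. \<forall>f\<in>Hom w x. \<forall>g\<in>Hom x y. \<forall>k\<in>Hom y z.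
        cmp w y z k (cmp w x y g f) = cmp w x z (cmp x y z k g) f) \<and>
     (\<forall>x\<in>Ob. idn x \<in> Hom x x) \<and>
     (\<forall>x\<in>Ob. \<forall>y\<in>Ob. \<forall>f\<in>Hom x y. cmp x y y (idn y) f = f \<and> cmp x x y f (idn x) = f) \<and>
     (\<forall>x\<in>Ob. \<forall>y\<in>Ob. \<forall>z\<in>Ob. \<forall>f\<in>Hom x y. \<forall>f'\<in>Hom x y. \<forall>g\<in>Hom y z. \<forall>g'\<in>Hom y z. \<forall>c.
        cmp x y z (g + g') f = cmp x y z g f + cmp x y z g' f \<and>
        cmp x y z g (f + f') = cmp x y z g f + cmp x y z g f' \<and>
        cmp x y z (sR c g) f = sR c (cmp x y z g f) \<and>
        cmp x y z g (sR c f) = sR c (cmp x y z g f))"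

definition is_iso_obj ::
  "('o \<Rightarrow> 'o \<Rightarrow> 'm set) \<Rightarrow> ('o \<Rightarrow> 'o \<Rightarrow> 'o \<Rightarrow> 'm \<Rightarrow> 'm \<Rightarrow> 'm) \<Rightarrow> ('o \<Rightarrow> 'm) \<Rightarrow> 'o \<Rightarrow> 'o \<Rightarrow> bool" where
  "is_iso_obj Hom cmp idn x y \<longleftrightarrow>
     (\<exists>f\<in>Hom x y. \<exists>g\<in>Hom y x. cmp x y x g f = idn x \<and> cmp y x y f g = idn y)"

definition is_unit_end ::
  "('o \<Rightarrow> 'o \<Rightarrow> 'm set) \<Rightarrow> ('o \<Rightarrow> 'o \<Rightarrow> 'o \<Rightarrow> 'm \<Rightarrow> 'm \<Rightarrow> 'm) \<Rightarrow> ('o \<Rightarrow> 'm) \<Rightarrow> 'o \<Rightarrow> 'm \<Rightarrow> bool" where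
  "is_unit_end Hom cmp idn x f \<longleftrightarrow>
     (\<exists>g\<in>Hom x x. cmp x x x g f = idn x \<and> cmp x x x f g = idn x)"

definition local_end ::
  "('o \<Rightarrow> 'o \<Rightarrow> 'm::ab_group_add set) \<Rightarrow> ('o \<Rightarrow> 'o \<Rightarrow> 'o \<Rightarrow> 'm \<Rightarrow> 'm \<Rightarrow> 'm) \<Rightarrow> ('o \<Rightarrow> 'm) \<Rightarrow> 'o \<Rightarrow> bool" where
  "local_end Hom cmp idn x \<longleftrightarrow> idn x \<noteq> 0 \<and>
     (\<forall>f\<in>Hom x x. \<forall>g\<in>Hom x x. \<not> is_unit_end Hom cmp idn x f \<longrightarrow> \<not> is_unit_end Hom cmp idn x g
        \<longrightarrow> \<not> is_unit_end Hom cmp idn x (f + g))"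

definition locally_bounded ::
  "('k::field \<Rightarrow> 'm::ab_group_add \<Rightarrow> 'm) \<Rightarrow> 'o set \<Rightarrow> ('o \<Rightarrow> 'o \<Rightarrow> 'm set)
   \<Rightarrow> ('o \<Rightarrow> 'o \<Rightarrow> 'o \<Rightarrow> 'm \<Rightarrow> 'm \<Rightarrow> 'm) \<Rightarrow> ('o \<Rightarrow> 'm) \<Rightarrow> bool" where
  "locally_bounded sR Ob Hom cmp idn \<longleftrightarrow>
     Kcat sR Ob Hom cmp idn \<and>
     (\<forall>x\<in>Ob. \<forall>y\<in>Ob. is_iso_obj Hom cmp idn x y \<longrightarrow> x = y) \<and>
     (\<forall>x\<in>Ob. local_end Hom cmp idn x) \<and>
     (\<forall>x\<in>Ob. \<forall>y\<in>Ob. fin_dim sR (Hom x y)) \<and>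
     (\<forall>x\<in>Ob. finite {y\<in>Ob. Hom x y \<noteq> {0}} \<and> finite {y\<in>Ob. Hom y x \<noteq> {0}})"

(* A module over the full subcategory with object set D (contravariant K-linear functor):
   Xsp a = X(a), and for f \<in> Hom b a (f : b -> a), Xact a b f = X(f) : X(a) -> X(b). *)
definition Kmod_on ::
  "('k::field \<Rightarrow> 'm::ab_group_add \<Rightarrow> 'm) \<Rightarrow> 'o set \<Rightarrow> ('o \<Rightarrow> 'o \<Rightarrow> 'm set)
   \<Rightarrow> ('o \<Rightarrow> 'o \<Rightarrow> 'o \<Rightarrow> 'm \<Rightarrow> 'm \<Rightarrow> 'm) \<Rightarrow> ('o \<Rightarrow> 'm)
   \<Rightarrow> ('k \<Rightarrow> 'v::ab_group_add \<Rightarrow> 'v) \<Rightarrow> ('o \<Rightarrow> 'v set) \<Rightarrow> ('o \<Rightarrow> 'o \<Rightarrow> 'm \<Rightarrow> 'v \<Rightarrow> 'v) \<Rightarrow> bool" where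
  "Kmod_on sR D Hom cmp idn sV Xsp Xact \<longleftrightarrow>
     vector_space sV \<and>
     (\<forall>a\<in>D. module.subspace sV (Xsp a)) \<and>
     (\<forall>a\<in>D. \<forall>b\<in>D. \<forall>f\<in>Hom b a. \<forall>v\<in>Xsp a. Xact a b f v \<in> Xsp b) \<and>
     (\<forall>a\<in>D. \<forall>b\<in>D. \<forall>f\<in>Hom b a. \<forall>v\<in>Xsp a. \<forall>w\<in>Xsp a. \<forall>c.
        Xact a b f (v + w) = Xact a b f v + Xact a b f w \<and>
        Xact a b f (sV c v) = sV c (Xact a b f v)) \<and>
     (\<forall>a\<in>D. \<forall>b\<in>D. \<forall>f\<in>Hom b a. \<forall>f'\<in>Hom b a. \<forall>v\<in>Xsp a. \<forall>c.
        Xact a b (f + f') v = Xact a b f v + Xact a b f' v \<and>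
        Xact a b (sR c f) v = sV c (Xact a b f v)) \<and>
     (\<forall>a\<in>D. \<forall>v\<in>Xsp a. Xact a a (idn a) v = v) \<and>
     (\<forall>a\<in>D. \<forall>b\<in>D. \<forall>c\<in>D. \<forall>f\<in>Hom c b. \<forall>g\<in>Hom b a. \<forall>v\<in>Xsp a.
        Xact a c (cmp c b a g f) v = Xact b c f (Xact a b g v))"

definition in_Mod where
  "in_Mod sR Ob Hom cmp idn sV Xsp Xact \<longleftrightarrow>
     Kmod_on sR Ob Hom cmp idn sV Xsp Xact \<and> (\<forall>a\<in>Ob. fin_dim sV (Xsp a))"

definition in_mod where
  "in_mod sR Ob Hom cmp idn sV Xsp Xact \<longleftrightarrow>
     in_Mod sR Ob Hom cmp idn sV Xsp Xact \<and> finite {a\<in>Ob. Xsp a \<noteq> {0}}"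

definition supp :: "'o set \<Rightarrow> ('o \<Rightarrow> 'v::zero set) \<Rightarrow> 'o set" where
  "supp Ob Msp = {a\<in>Ob. Msp a \<noteq> {0}}"

(* homomorphism of modules over the full subcategory with object set D
   (for D a set of objects: a homomorphism res_D X \<rightarrow> res_D M) *)
definition mod_hom_on ::
  "'o set \<Rightarrow> ('o \<Rightarrow> 'o \<Rightarrow> 'm set)
   \<Rightarrow> ('k \<Rightarrow> 'v::ab_group_add \<Rightarrow> 'v) \<Rightarrow> ('o \<Rightarrow> 'v set) \<Rightarrow> ('o \<Rightarrow> 'o \<Rightarrow> 'm \<Rightarrow> 'v \<Rightarrow> 'v)
   \<Rightarrow> ('k \<Rightarrow> 'w::ab_group_add \<Rightarrow> 'w) \<Rightarrow> ('o \<Rightarrow> 'w set) \<Rightarrow> ('o \<Rightarrow> 'o \<Rightarrow> 'm \<Rightarrow> 'w \<Rightarrow> 'w)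
   \<Rightarrow> ('o \<Rightarrow> 'v \<Rightarrow> 'w) \<Rightarrow> bool" where
  "mod_hom_on D Hom sV Xsp Xact sW Msp Mact h \<longleftrightarrow>
     (\<forall>a\<in>D. \<forall>x\<in>Xsp a. h a x \<in> Msp a) \<and>
     (\<forall>a\<in>D. \<forall>x\<in>Xsp a. \<forall>y\<in>Xsp a. \<forall>c. h a (x + y) = h a x + h a y \<and> h a (sV c x) = sW c (h a x)) \<and>
     (\<forall>a\<in>D. \<forall>b\<in>D. \<forall>f\<in>Hom b a. \<forall>x\<in>Xsp a. h b (Xact a b f x) = Mact a b f (h a x))"

end

theory Submission
  imports Defs
begin

theorem lemma3p5:
  fixes sR :: "'k::field \<Rightarrow> 'm::ab_group_add \<Rightarrow> 'm"
    and Ob :: "'o set" and Hom :: "'o \<Rightarrow> 'o \<Rightarrow> 'm set"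
    and cmp :: "'o \<Rightarrow> 'o \<Rightarrow> 'o \<Rightarrow> 'm \<Rightarrow> 'm \<Rightarrow> 'm" and idn :: "'o \<Rightarrow> 'm"
    and sV :: "'k \<Rightarrow> 'v::ab_group_add \<Rightarrow> 'v" and Xsp :: "'o \<Rightarrow> 'v set"
    and Xact :: "'o \<Rightarrow> 'o \<Rightarrow> 'm \<Rightarrow> 'v \<Rightarrow> 'v"
    and sW :: "'k \<Rightarrow> 'w::ab_group_add \<Rightarrow> 'w" and Msp :: "'o \<Rightarrow> 'w set"
    and Mact :: "'o \<Rightarrow> 'o \<Rightarrow> 'm \<Rightarrow> 'w \<Rightarrow> 'w"
    and C D :: "'o set" and h :: "'o \<Rightarrow> 'v \<Rightarrow> 'w"
  assumes "alg_closed_field TYPE('k)"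
    and "locally_bounded sR Ob Hom cmp idn"
    and "in_Mod sR Ob Hom cmp idn sV Xsp Xact"
    and "in_mod sR Ob Hom cmp idn sW Msp Mact"
    and "C \<subseteq> Ob"
    and "supp Ob Msp \<subseteq> C"
    and "D = {x\<in>Ob. \<exists>c\<in>C. Hom c x \<noteq> {0}}"
    and "mod_hom_on D Hom sV Xsp Xact sW Msp Mact h"
  shows "mod_hom_on Ob Hom sV Xsp Xact sW Msp Mact
           (\<lambda>a x. if a \<in> supp Ob Msp then h a x else 0)"
proof -
  have KX: "Kmod_on sR Ob Hom cmp idn sV Xsp Xact" using assms(3) by (simp add: in_Mod_def)
  have KM: "Kmod_on sR Ob Hom cmp idn sW Msp Mact" using assms(4) by (simp add: in_mod_def in_Mod_def)
  have vsW: "vector_space sW" using KM by (simp add: Kmod_on_def)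
  have Xa: "\<And>a b f v. a\<in>Ob \<Longrightarrow> b\<in>Ob \<Longrightarrow> f\<in>Hom b a \<Longrightarrow> v\<in>Xsp a \<Longrightarrow> Xact a b f v \<in> Xsp b"
    using KX by (simp add: Kmod_on_def)
  have Xlin: "\<And>a b f f' v. a\<in>Ob \<Longrightarrow> b\<in>Ob \<Longrightarrow> f\<in>Hom b a \<Longrightarrow> f'\<in>Hom b a \<Longrightarrow> v\<in>Xsp a \<Longrightarrow>
     Xact a b (f + f') v = Xact a b f v + Xact a b f' v"
    using KX by (simp add: Kmod_on_def)
  have Ma: "\<And>a b f v. a\<in>Ob \<Longrightarrow> b\<in>Ob \<Longrightarrow> f\<in>Hom b a \<Longrightarrow> v\<in>Msp a \<Longrightarrow> Mact a b f v \<in> Msp b"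
    using KM by (simp add: Kmod_on_def)
  have Mlin: "\<And>a b f v w. a\<in>Ob \<Longrightarrow> b\<in>Ob \<Longrightarrow> f\<in>Hom b a \<Longrightarrow> v\<in>Msp a \<Longrightarrow> w\<in>Msp a \<Longrightarrow>
     Mact a b f (v + w) = Mact a b f v + Mact a b f w"
    using KM by (simp add: Kmod_on_def)
  have H: "mod_hom_on D Hom sV Xsp Xact sW Msp Mact h" by fact
  have hin: "\<And>a x. a\<in>D \<Longrightarrow> x\<in>Xsp a \<Longrightarrow> h a x \<in> Msp a" using H by (simp add: mod_hom_on_def)
  have hlin: "\<And>a x y c. a\<in>D \<Longrightarrow> x\<in>Xsp a \<Longrightarrow> y\<in>Xsp a \<Longrightarrow> h a (x + y) = h a x + h a y \<and> h a (sV c x) = sW c (h a x)"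
    using H by (simp add: mod_hom_on_def)
  have hnat: "\<And>a b f x. a\<in>D \<Longrightarrow> b\<in>D \<Longrightarrow> f\<in>Hom b a \<Longrightarrow> x\<in>Xsp a \<Longrightarrow> h b (Xact a b f x) = Mact a b f (h a x)"
    using H by (simp add: mod_hom_on_def)
  have nsupp: "\<And>a. a\<in>Ob \<Longrightarrow> a \<notin> supp Ob Msp \<Longrightarrow> Msp a = {0}" by (simp add: supp_def)
  have suppD: "\<And>a. a \<in> supp Ob Msp \<Longrightarrow> a \<in> D"
  proof -
    fix a assume a: "a \<in> supp Ob Msp"
    then have aC: "a \<in> C" "a \<in> Ob" using assms(6) by (auto simp: supp_def)
    have "local_end Hom cmp idn a" using assms(2) aC by (simp add: locally_bounded_def)
    then have "idn a \<noteq> 0" by (simp add: local_end_def)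
    moreover have "idn a \<in> Hom a a" using assms(2) aC by (simp add: locally_bounded_def Kcat_def)
    ultimately have "Hom a a \<noteq> {0}" by auto
    then show "a \<in> D" using aC assms(7) by auto
  qed
  have Mzero: "\<And>a b f. a\<in>Ob \<Longrightarrow> b\<in>Ob \<Longrightarrow> f\<in>Hom b a \<Longrightarrow> 0 \<in> Msp a \<Longrightarrow> Mact a b f 0 = 0"
  proof -
    fix a b f assume "a\<in>Ob" "b\<in>Ob" "f\<in>Hom b a" "0 \<in> Msp a"
    from Mlin[OF this(1-4) this(4)] show "Mact a b f 0 = 0" by simp
  qed
  show ?thesis
    unfolding mod_hom_on_def
  proof (intro conjI ballI allI)
    fix a x assume a: "a \<in> Ob" and x: "x \<in> Xsp a"
    show "(if a \<in> supp Ob Msp then h a x else 0) \<in> Msp a"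
      using hin[OF suppD x] nsupp[OF a] by auto
  next
    fix a x y c assume a: "a \<in> Ob" and x: "x \<in> Xsp a" and y: "y \<in> Xsp a"
    show "(if a \<in> supp Ob Msp then h a (x + y) else 0) =
          (if a \<in> supp Ob Msp then h a x else 0) + (if a \<in> supp Ob Msp then h a y else 0)"
      using hlin[OF suppD x y] by auto
    show "(if a \<in> supp Ob Msp then h a (sV c x) else 0) = sW c (if a \<in> supp Ob Msp then h a x else 0)"
      using hlin[OF suppD x y] module.scale_zero_right[OF vsW[folded module_iff_vector_space]] by auto
  next
    fix a b f x assume a: "a \<in> Ob" and b: "b \<in> Ob" and f: "f \<in> Hom b a" and x: "x \<in> Xsp a"
    have h'in: "(if a \<in> supp Ob Msp then h a x else 0) \<in> Msp a"
      using hin[OF suppD x] nsupp[OF a] by auto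
    show "(if b \<in> supp Ob Msp then h b (Xact a b f x) else 0) =
          Mact a b f (if a \<in> supp Ob Msp then h a x else 0)"
    proof (cases "b \<in> supp Ob Msp")
      case False
      have "Mact a b f (if a \<in> supp Ob Msp then h a x else 0) \<in> Msp b" by (rule Ma[OF a b f h'in])
      then show ?thesis using False nsupp[OF b] by auto
    next
      case bs: True
      have bD: "b \<in> D" by (rule suppD[OF bs])
      have bC: "b \<in> C" using bs assms(6) by auto
      show ?thesis
      proof (cases "a \<in> supp Ob Msp")
        case True
        then show ?thesis using bs hnat[OF suppD[OF True] bD f x] by simp
      next
        case as: False
        have M0: "Msp a = {0}" by (rule nsupp[OF a as])
        have rhs: "Mact a b f (if a \<in> supp Ob Msp then h a x else 0) = 0"
          using as Mzero[OF a b f] M0 by simp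
        show ?thesis
        proof (cases "a \<in> D")
          case True
          have "h a x \<in> Msp a" by (rule hin[OF True x])
          then have "h a x = 0" using M0 by auto
          then show ?thesis using bs as hnat[OF True bD f x] Mzero[OF a b f] M0 by simp
        next
          case False
          then have "Hom b a = {0}" using assms(7) a bC by auto
          then have f0: "f = 0" using f by auto
          have "Xact a b 0 x = Xact a b 0 x + Xact a b 0 x"
            using Xlin[OF a b _ _ x, of 0 0] f f0 by simp
          then have X0: "Xact a b f x = 0" using f0 by simp
          have "0 \<in> Xsp b" using Xa[OF a b f x] X0 by simp
          then have "h b 0 = 0" using hlin[OF bD, of 0 0] by simp
          then show ?thesis using bs X0 rhs by simp
        qed
      qed
    qed
  qed
qed

end
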